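(* For all $\phi\in C(\mathbb{Z}_p,\mathbb{C}_p)$ and all $y\in\mathbb{Z}_p$, $S^y(\phi)=(\mathbf 1-\mathbf x)^{\star y}\star\phi$.
   Context: Fix a prime $p$. $\mathbb{C}_p$ denotes the completion of an algebraic closure of $\mathbb{Q}_p$, with absolute value $|\cdot|$ normalized by $|p|=1/p$. $C(\mathbb{Z}_p,\mathbb{C}_p)$ is the $\mathbb{C}_p$-Banach space of continuous functions $\mathbb{Z}_p\to\mathbb{C}_p$ with the sup-norm $\|\cdot\|$. For $n\in\mathbb{Z}_{\ge0}$ and $x\in\mathbb{Z}_p$, $\binom{x}{n}=x(x-1)\cdots(x-n+1)/n!$. For $\phi\in C(\mathbb{Z}_p,\mathbb{C}_p)$ let $(\nabla\phi)(x)=\phi(x+1)-\phi(x)$; every such $\phi$ has the Mahler expansion $\phi(x)=\sum_{n\ge0}(\nabla^n\phi)(0)\binom{x}{n}$. The convolution $\phi\star\psi$ of $\phi,\psi\in C(\mathbb{Z}_p,\mathbb{C}_p)$ is the continuous function with Mahler coefficients $(\nabla^n(\phi\star\psi))(0)=\sum_{k=0}^n\binom nk(\nabla^k\phi)(0)(\nabla^{n-k}\psi)(0)$. For $y\in\mathbb{Z}_p$ define $S^y(\phi)(x)=\sum_{k\ge0}(-1)^k k!\binom yk\binom xk\phi(x-k)$. Write $\mathbf 1$ for the constant function $1$ and $\mathbf x$ for $x\mapsto x$, and set $(\mathbf 1-\mathbf x)^{\star y}:=S^y(\mathbf 1)$ for $y\in\mathbb{Z}_p$. *)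

theory Defs
  imports "HOL-Computational_Algebra.Polynomial"
begin

text \<open>We do not construct C_p; instead we fix an arbitrary field K of characteristic 0
with an absolute value nrm satisfying axioms characterizing (K, nrm) up to isometric
isomorphism as C_p: nonarchimedean, |p| = 1/p, complete, algebraically closed, and the
algebraic closure of Q_p (= closure of Q in K) is dense in K.
Z_p is realised as the closure of the integers inside K.\<close>

definition Qp_in :: "('a::field_char_0 \<Rightarrow> real) \<Rightarrow> 'a set" where
  "Qp_in nrm = {z. \<forall>e>0. \<exists>r::rat. nrm (z - of_rat r) < e}"

definition Zp :: "('a::field_char_0 \<Rightarrow> real) \<Rightarrow> 'a set" where
  "Zp nrm = {z. \<forall>e>0. \<exists>n::int. nrm (z - of_int n) < e}"

definition is_Cp :: "nat \<Rightarrow> ('a::field_char_0 \<Rightarrow> real) \<Rightarrow> bool" where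
  "is_Cp p nrm \<longleftrightarrow>
     prime p \<and>
     (\<forall>x. nrm x \<ge> 0) \<and> (\<forall>x. nrm x = 0 \<longleftrightarrow> x = 0) \<and>
     (\<forall>x y. nrm (x * y) = nrm x * nrm y) \<and>
     (\<forall>x y. nrm (x + y) \<le> max (nrm x) (nrm y)) \<and>
     nrm (of_nat p) = 1 / real p \<and>
     (\<forall>X::nat \<Rightarrow> 'a. (\<forall>e>0. \<exists>N. \<forall>m\<ge>N. \<forall>n\<ge>N. nrm (X m - X n) < e) \<longrightarrow>
         (\<exists>L. (\<lambda>n. nrm (X n - L)) \<longlonglongrightarrow> 0)) \<and>
     (\<forall>q::'a poly. degree q > 0 \<longrightarrow> (\<exists>x. poly q x = 0)) \<and>
     (\<forall>x. \<forall>e>0. \<exists>z. nrm (x - z) < e \<and>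
         (\<exists>q::'a poly. q \<noteq> 0 \<and> (\<forall>i. coeff q i \<in> Qp_in nrm) \<and> poly q z = 0))"

text \<open>Continuity of a function Z_p -> C_p (values outside Z_p are irrelevant).\<close>
definition cont_Zp :: "('a::field_char_0 \<Rightarrow> real) \<Rightarrow> ('a \<Rightarrow> 'a) \<Rightarrow> bool" where
  "cont_Zp nrm f \<longleftrightarrow> (\<forall>x\<in>Zp nrm. \<forall>e>0. \<exists>d>0. \<forall>x'\<in>Zp nrm.
       nrm (x' - x) < d \<longrightarrow> nrm (f x' - f x) < e)"

definition nsums :: "('a::field_char_0 \<Rightarrow> real) \<Rightarrow> (nat \<Rightarrow> 'a) \<Rightarrow> 'a \<Rightarrow> bool" where
  "nsums nrm a s \<longleftrightarrow> (\<lambda>N. nrm (s - (\<Sum>k<N. a k))) \<longlonglongrightarrow> 0"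

definition nsum :: "('a::field_char_0 \<Rightarrow> real) \<Rightarrow> (nat \<Rightarrow> 'a) \<Rightarrow> 'a" where
  "nsum nrm a = (THE s. nsums nrm a s)"

definition nabla :: "('a::field_char_0 \<Rightarrow> 'a) \<Rightarrow> 'a \<Rightarrow> 'a" where
  "nabla f = (\<lambda>x. f (x + 1) - f x)"

definition mahler :: "('a::field_char_0 \<Rightarrow> 'a) \<Rightarrow> nat \<Rightarrow> 'a" where
  "mahler f n = (nabla ^^ n) f 0"

definition conv :: "('a::field_char_0 \<Rightarrow> real) \<Rightarrow> ('a \<Rightarrow> 'a) \<Rightarrow> ('a \<Rightarrow> 'a) \<Rightarrow> 'a \<Rightarrow> 'a" where
  "conv nrm f g x = nsum nrm (\<lambda>n.
      (\<Sum>k\<le>n. of_nat (n choose k) * mahler f k * mahler g (n - k)) * (x gchoose n))"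

definition Sop :: "('a::field_char_0 \<Rightarrow> real) \<Rightarrow> 'a \<Rightarrow> ('a \<Rightarrow> 'a) \<Rightarrow> 'a \<Rightarrow> 'a" where
  "Sop nrm y f x = nsum nrm (\<lambda>k.
      (-1) ^ k * fact k * (y gchoose k) * (x gchoose k) * f (x - of_nat k))"

definition one_minus_x_pow :: "('a::field_char_0 \<Rightarrow> real) \<Rightarrow> 'a \<Rightarrow> 'a \<Rightarrow> 'a" where
  "one_minus_x_pow nrm y = Sop nrm y (\<lambda>_. 1)"

end

theory Submission imports Defs "HOL-Computational_Algebra.Primes" begin

locale cpl =
  fixes p :: nat and nrm :: "'a::field_char_0 \<Rightarrow> real"
  assumes cp: "is_Cp p nrm"
begin

lemma prime_p: "prime p" using cp by (simp add: is_Cp_def)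
lemma p_ge2: "p \<ge> 2" using prime_p prime_ge_2_nat by blast
lemma nn: "nrm x \<ge> 0" using cp by (simp add: is_Cp_def)
lemma nz: "nrm x = 0 \<longleftrightarrow> x = 0" using cp by (simp add: is_Cp_def)
lemma nmult: "nrm (x * y) = nrm x * nrm y" using cp by (simp add: is_Cp_def)
lemma nadd: "nrm (x + y) \<le> max (nrm x) (nrm y)" using cp by (simp add: is_Cp_def)
lemma np: "nrm (of_nat p) = 1 / real p" using cp by (simp add: is_Cp_def)
lemma ncomplete: "(\<forall>e>0. \<exists>N. \<forall>m\<ge>N. \<forall>n\<ge>N. nrm (X m - X n) < e) \<Longrightarrow>
         (\<exists>L. (\<lambda>n. nrm (X n - L)) \<longlonglongrightarrow> 0)" using cp by (simp add: is_Cp_def)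

lemma n0[simp]: "nrm 0 = 0" using nz by simp

lemma n1: "nrm 1 = 1"
proof -
  have "nrm 1 = nrm 1 * nrm 1" using nmult[of 1 1] by simp
  moreover have "nrm 1 \<noteq> 0" using nz by simp
  ultimately show ?thesis by (metis mult_cancel_left1)
qed

lemma nminus1: "nrm (-1) = 1"
proof -
  have "nrm (-1) * nrm (-1) = 1" using nmult[of "-1" "-1"] n1 by simp
  moreover have "nrm (-1) \<ge> 0" by (rule nn)
  ultimately show ?thesis by (metis mult_cancel_right1 mult_le_cancel_right1 mult_le_one nle_le
      order.strict_iff_not zero_le_one)
qed

lemma numinus: "nrm (- x) = nrm x"
  using nmult[of "-1" x] nminus1 by simp

lemma ncomm: "nrm (x - y) = nrm (y - x)"
  by (metis minus_diff_eq numinus)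

lemma ndiff: "nrm (x - y) \<le> max (nrm x) (nrm y)"
  using nadd[of x "-y"] by (simp add: numinus)

lemma ntri: "nrm (x - z) \<le> max (nrm (x - y)) (nrm (y - z))"
  using nadd[of "x - y" "y - z"] by simp

lemma npow: "nrm (x ^ n) = nrm x ^ n"
  by (induction n) (simp_all add: n1 nmult)

lemma nprod: "nrm (prod f A) = prod (\<lambda>i. nrm (f i)) A"
  by (induction A rule: infinite_finite_induct) (simp_all add: n1 nmult)

lemma ndiv: "nrm (x / y) = nrm x / nrm y"
proof (cases "y = 0")
  case True then show ?thesis by (simp add: nz)
next
  case False
  have "nrm (x / y) * nrm y = nrm x" using nmult[of "x/y" y] False by simp
  moreover have "nrm y \<noteq> 0" using False nz by simp
  ultimately show ?thesis by (simp add: field_simps)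
qed

lemma nsum_le: "(\<And>i. i \<in> A \<Longrightarrow> nrm (f i) \<le> B) \<Longrightarrow> B \<ge> 0 \<Longrightarrow> nrm (sum f A) \<le> B"
proof (induction A rule: infinite_finite_induct)
  case (infinite A) then show ?case by (simp add: nz)
next
  case empty then show ?case by (simp add: nz)
next
  case (insert x F)
  have "nrm (f x) \<le> B" "nrm (sum f F) \<le> B" using insert by auto
  then have "max (nrm (f x)) (nrm (sum f F)) \<le> B" by simp
  then show ?case using insert(1,2) nadd[of "f x" "sum f F"] by (auto simp: max_def split: if_splits)
qed

lemma nsum_less: "(\<And>i. i \<in> A \<Longrightarrow> nrm (f i) < B) \<Longrightarrow> B > 0 \<Longrightarrow> nrm (sum f A) < B"
proof (induction A rule: infinite_finite_induct)
  case (infinite A) then show ?case by (simp add: nz)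
next
  case empty then show ?case by (simp add: nz)
next
  case (insert x F)
  have "nrm (f x) < B" "nrm (sum f F) < B" using insert by auto
  then have "max (nrm (f x)) (nrm (sum f F)) < B" by simp
  then show ?case using insert(1,2) nadd[of "f x" "sum f F"] by (auto simp: max_def split: if_splits)
qed

lemma nnat: "nrm (of_nat n) \<le> 1"
proof (induction n)
  case 0 then show ?case by (simp add: nz)
next
  case (Suc n) then show ?case using nadd[of 1 "of_nat n"] n1 by simp
qed

lemma nint: "nrm (of_int n) \<le> 1"
proof (cases "n \<ge> 0")
  case True then show ?thesis using nnat[of "nat n"] by simp
next
  case False then show ?thesis using nnat[of "nat (-n)"] numinus[of "of_int n"] by simp
qed

lemma npow_p: "nrm (of_nat p ^ s) = (1 / real p) ^ s"
  by (simp add: npow np)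

lemma invp_less1: "1 / real p < 1" using p_ge2 by simp
lemma invp_pos: "1 / real p > 0" using p_ge2 by simp

lemma invp_pow_small: "e > 0 \<Longrightarrow> \<exists>s. (1 / real p) ^ s < e"
  using real_arch_pow_inv[OF _ invp_less1] by blast

lemma invp_pow_mono: "s \<le> t \<Longrightarrow> (1 / real p) ^ t \<le> (1 / real p) ^ s"
  using invp_less1 invp_pos by (simp add: power_decreasing)

lemma nint_pmult: "nrm (of_int (int p ^ s * q)) \<le> (1 / real p) ^ s"
proof -
  have "nrm (of_int (int p ^ s * q) :: 'a) = nrm ((of_nat p) ^ s * of_int q)" by simp
  also have "\<dots> = (1 / real p) ^ s * nrm (of_int q :: 'a)" by (simp add: nmult npow_p)
  also have "\<dots> \<le> (1 / real p) ^ s" using nint[of q] invp_pos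
    by (simp add: mult_left_le)
  finally show ?thesis .
qed

end

context cpl begin

lemma Zp_int: "of_int n \<in> Zp nrm"
  unfolding Zp_def by (auto intro!: exI[of _ n])
lemma Zp_nat: "of_nat n \<in> Zp nrm"
  using Zp_int[of "int n"] by simp

lemma Zp_add: assumes "z \<in> Zp nrm" "w \<in> Zp nrm" shows "z + w \<in> Zp nrm"
  unfolding Zp_def
proof (intro CollectI allI impI)
  fix e :: real assume e: "e > 0"
  obtain n :: int where n: "nrm (z - of_int n) < e" using assms(1) e unfolding Zp_def by blast
  obtain m :: int where m: "nrm (w - of_int m) < e" using assms(2) e unfolding Zp_def by blast
  have "nrm (z + w - of_int (n + m)) \<le> max (nrm (z - of_int n)) (nrm (w - of_int m))"
    using nadd[of "z - of_int n" "w - of_int m"] by (simp add: algebra_simps)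
  then show "\<exists>n::int. nrm (z + w - of_int n) < e" using n m by (intro exI[of _ "n+m"]) simp
qed

lemma Zp_uminus: assumes "z \<in> Zp nrm" shows "- z \<in> Zp nrm"
  unfolding Zp_def
proof (intro CollectI allI impI)
  fix e :: real assume e: "e > 0"
  obtain n :: int where n: "nrm (z - of_int n) < e" using assms(1) e unfolding Zp_def by blast
  have "nrm (- z - of_int (-n)) = nrm (z - of_int n)" using numinus[of "z - of_int n"] by simp
  then show "\<exists>n::int. nrm (- z - of_int n) < e" using n by (intro exI[of _ "-n"]) simp
qed

lemma Zp_diff: "z \<in> Zp nrm \<Longrightarrow> w \<in> Zp nrm \<Longrightarrow> z - w \<in> Zp nrm"
  using Zp_add[of z "-w"] Zp_uminus[of w] by simp

lemma Zp_le1: assumes "z \<in> Zp nrm" shows "nrm z \<le> 1"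
proof -
  obtain n :: int where n: "nrm (z - of_int n) < 1" using assms unfolding Zp_def by force
  have "nrm z \<le> max (nrm (z - of_int n)) (nrm (of_int n))" using nadd[of "z - of_int n" "of_int n"] by simp
  then show ?thesis using n nint[of n] by simp
qed

lemma approxA: assumes "z \<in> Zp nrm" shows "\<exists>j<p^s. nrm (z - of_nat j) \<le> (1 / real p) ^ s"
proof -
  have pos: "(1 / real p) ^ s > 0" using invp_pos by simp
  obtain n :: int where n: "nrm (z - of_int n) < (1 / real p) ^ s" using assms pos unfolding Zp_def by blast
  define P where "P = int p ^ s"
  have P0: "P > 0" using p_ge2 by (simp add: P_def)
  define j where "j = nat (n mod P)"
  have jlt: "j < p ^ s" using P0 unfolding j_def P_def
    by (metis (no_types, lifting) nat_less_iff of_nat_power pos_mod_bound pos_mod_sign)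
  have nj: "n = P * (n div P) + int j" using P0 unfolding j_def by simp
  have "nrm (of_int n - of_nat j :: 'a) = nrm (of_int (P * (n div P)) :: 'a)"
    using arg_cong[OF nj, of "\<lambda>t. nrm (of_int t - of_nat j :: 'a)"] by simp
  also have "\<dots> \<le> (1 / real p) ^ s" unfolding P_def by (rule nint_pmult)
  finally have a: "nrm (of_int n - of_nat j :: 'a) \<le> (1 / real p) ^ s" .
  have "nrm (z - of_nat j) \<le> max (nrm (z - of_int n)) (nrm (of_int n - of_nat j))" by (rule ntri)
  then have "nrm (z - of_nat j) \<le> (1 / real p) ^ s" using a n by simp
  then show ?thesis using jlt by blast
qed

lemma approx_nat: assumes "z \<in> Zp nrm" "e > 0" shows "\<exists>j. nrm (z - of_nat j) < e"
proof -
  obtain s where s: "(1 / real p) ^ s < e" using invp_pow_small assms(2) by blast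
  obtain j where "nrm (z - of_nat j) \<le> (1 / real p) ^ s" using approxA[OF assms(1)] by blast
  then show ?thesis using s by (intro exI[of _ j]) simp
qed

end

context cpl begin
lemma gch_nat: "(of_nat m gchoose k :: 'a) = of_nat (m choose k)"
  by (simp add: binomial_gbinomial)

lemma nprod_diff:
  assumes "\<And>i. i \<in> A \<Longrightarrow> nrm (u i) \<le> 1 \<and> nrm (v i) \<le> 1 \<and> nrm (u i - v i) \<le> B" "B \<ge> 0"
  shows "nrm (prod u A - prod v A) \<le> B" using assms
proof (induction A rule: infinite_finite_induct)
  case (infinite A) then show ?case by simp
next
  case empty then show ?case by simp
next
  case (insert x F)
  have IH: "nrm (prod u F - prod v F) \<le> B" using insert by auto
  have ux: "nrm (u x) \<le> 1" "nrm (v x) \<le> 1" "nrm (u x - v x) \<le> B" using insert by auto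
  have pv: "nrm (prod v F) \<le> 1" using insert by (auto simp: nprod intro!: prod_le_1 nn)
  have eq: "prod u (insert x F) - prod v (insert x F) = u x * (prod u F - prod v F) + (u x - v x) * prod v F"
    using insert(1,2) by (simp add: algebra_simps)
  have a: "nrm (u x * (prod u F - prod v F)) \<le> B"
  proof -
    have "nrm (u x) * nrm (prod u F - prod v F) \<le> 1 * B"
      using ux IH by (intro mult_mono) (auto simp: nn)
    then show ?thesis by (simp add: nmult)
  qed
  have b: "nrm ((u x - v x) * prod v F) \<le> B"
  proof -
    have "nrm (u x - v x) * nrm (prod v F) \<le> B * 1"
      using ux pv insert.prems(2) by (intro mult_mono) (auto simp: nn)
    then show ?thesis by (simp add: nmult)
  qed
  show ?case unfolding eq using nadd[of "u x * (prod u F - prod v F)" "(u x - v x) * prod v F"] a b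
    by (auto simp: max_def split: if_splits)
qed

end

context cpl begin
lemma fact_pos: "nrm (fact k :: 'a) > 0"
  using nn[of "fact k"] nz[of "fact k"] by (simp add: less_le)

lemma gch_lip: assumes "z \<in> Zp nrm" "w \<in> Zp nrm"
  shows "nrm ((z gchoose k) - (w gchoose k)) \<le> nrm (z - w) / nrm (fact k :: 'a)"
proof -
  have "(z gchoose k) - (w gchoose k) = ((\<Prod>i=0..<k. z - of_nat i) - (\<Prod>i=0..<k. w - of_nat i)) / fact k"
    by (simp add: gbinomial_prod_rev diff_divide_distrib)
  moreover have "nrm ((\<Prod>i=0..<k. z - of_nat i) - (\<Prod>i=0..<k. w - of_nat i)) \<le> nrm (z - w)"
    by (rule nprod_diff) (auto intro!: Zp_le1 Zp_diff assms Zp_nat nn)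
  ultimately show ?thesis using fact_pos[of k] by (simp add: ndiv divide_right_mono)
qed

lemma gch_le1: assumes "z \<in> Zp nrm" shows "nrm (z gchoose k) \<le> 1"
proof -
  obtain j where j: "nrm (z - of_nat j) < nrm (fact k :: 'a)" using approx_nat[OF assms fact_pos] by blast
  have "nrm ((z gchoose k) - (of_nat j gchoose k)) \<le> nrm (z - of_nat j) / nrm (fact k :: 'a)"
    using gch_lip[OF assms Zp_nat] .
  also have "\<dots> \<le> 1" using j fact_pos[of k] by simp
  finally have a: "nrm ((z gchoose k) - (of_nat j gchoose k)) \<le> 1" .
  have b: "nrm (of_nat j gchoose k :: 'a) \<le> 1" using nnat by (simp add: gch_nat)
  show ?thesis using nadd[of "(z gchoose k) - (of_nat j gchoose k)" "of_nat j gchoose k"] a b by simp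
qed

end

context cpl begin

lemma fact_pm: "nrm (fact (p * m) :: 'a) \<le> (1 / real p) ^ m"
proof (induction m)
  case 0 then show ?case by (simp add: n1)
next
  case (Suc m)
  have "(fact (p * m) :: nat) dvd fact (p * Suc m - 1)" using p_ge2 by (intro fact_dvd) simp
  then obtain r where r: "fact (p * Suc m - 1) = fact (p * m) * (r::nat)" by blast
  have "(fact (p * Suc m) :: nat) = (p * Suc m) * fact (p * Suc m - 1)"
    using p_ge2 fact_reduce[of "p * Suc m", where 'a=nat] by simp
  also have "\<dots> = p * Suc m * (fact (p * m) * r)" using r by simp
  finally have e1: "(fact (p * Suc m) :: nat) = p * Suc m * (fact (p * m) * r)" .
  have "(fact (p * Suc m) :: 'a) = of_nat (fact (p * Suc m))" by (rule of_nat_fact[symmetric])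
  also have "\<dots> = of_nat p * of_nat (Suc m) * (of_nat (fact (p * m)) * of_nat r)"
    unfolding e1 by (simp only: of_nat_mult)
  also have "\<dots> = of_nat p * of_nat (Suc m) * (fact (p * m) * of_nat r)"
    by (simp only: of_nat_fact)
  finally have eq: "(fact (p * Suc m) :: 'a) = of_nat p * of_nat (Suc m) * (fact (p * m) * of_nat r)" .
  have "nrm (fact (p * Suc m) :: 'a) = (1 / real p) * nrm (of_nat (Suc m) :: 'a) * (nrm (fact (p * m) :: 'a) * nrm (of_nat r :: 'a))"
    unfolding eq by (simp only: nmult np)
  also have "\<dots> \<le> (1 / real p) * 1 * ((1 / real p) ^ m * 1)"
    using nnat[of "Suc m"] nnat[of r] Suc.IH invp_pos by (intro mult_mono) (auto simp del: of_nat_Suc intro!: mult_nonneg_nonneg nn)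
  finally show ?case by simp
qed

lemma fact_small: assumes "e > 0" shows "\<exists>K. \<forall>k\<ge>K. nrm (fact k :: 'a) < e"
proof -
  obtain m where m: "(1 / real p) ^ m < e" using invp_pow_small assms by blast
  have "nrm (fact k :: 'a) < e" if k: "k \<ge> p * m" for k
  proof -
    have "(fact (p * m) :: nat) dvd fact k" using k by (rule fact_dvd)
    then obtain r where r: "(fact k :: nat) = fact (p * m) * (r::nat)" by blast
    have "(fact k :: 'a) = of_nat (fact k)" by (rule of_nat_fact[symmetric])
    also have "\<dots> = of_nat (fact (p * m)) * of_nat r" unfolding r by (simp only: of_nat_mult)
    also have "\<dots> = fact (p * m) * of_nat r" by (simp only: of_nat_fact)
    finally have "nrm (fact k :: 'a) = nrm (fact (p * m) :: 'a) * nrm (of_nat r :: 'a)" by (simp only: nmult)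
    also have "\<dots> \<le> nrm (fact (p * m) :: 'a)" using nnat[of r] by (simp add: mult_left_le nn)
    finally show ?thesis using fact_pm[of m] m by simp
  qed
  then show ?thesis by blast
qed

end

context cpl begin

lemma psum_diff: fixes t :: "nat \<Rightarrow> 'a" shows "K \<le> n \<Longrightarrow> (\<Sum>k<n. t k) - (\<Sum>k<K. t k) = (\<Sum>k\<in>{K..<n}. t k)"
  by (simp add: atLeast0LessThan[symmetric] sum_diff_nat_ivl)

lemma nsums_unique: assumes "nsums nrm t s" "nsums nrm t s'" shows "s = s'"
proof (rule ccontr)
  assume ne: "s \<noteq> s'"
  define e where "e = nrm (s - s')"
  have e: "e > 0" using ne nz nn unfolding e_def by (metis eq_iff_diff_eq_0 less_le)
  obtain n1 where n1: "\<forall>n\<ge>n1. nrm (s - (\<Sum>k<n. t k)) < e"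
    using assms(1) e unfolding nsums_def LIMSEQ_iff by (auto simp: nn)
  obtain n2 where n2: "\<forall>n\<ge>n2. nrm (s' - (\<Sum>k<n. t k)) < e"
    using assms(2) e unfolding nsums_def LIMSEQ_iff by (auto simp: nn)
  define n where "n = max n1 n2"
  have a: "nrm (s - (\<Sum>k<n. t k)) < e" "nrm ((\<Sum>k<n. t k) - s') < e"
    using n1 n2 ncomm unfolding n_def by (auto)
  have "e \<le> max (nrm (s - (\<Sum>k<n. t k))) (nrm ((\<Sum>k<n. t k) - s'))"
    unfolding e_def by (rule ntri)
  then show False using a by simp
qed

lemma nsum_eq: "nsums nrm t s \<Longrightarrow> nsum nrm t = s"
  unfolding nsum_def using nsums_unique by blast

lemma nsums_exists: assumes "\<forall>e>0. \<exists>K. \<forall>k\<ge>K. nrm (t k) < e" shows "\<exists>s. nsums nrm t s"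
proof -
  define X where "X n = (\<Sum>k<n. t k)" for n
  have "\<exists>L. (\<lambda>n. nrm (X n - L)) \<longlonglongrightarrow> 0"
  proof (rule ncomplete, intro allI impI)
    fix e :: real assume e: "e > 0"
    obtain K where K: "\<forall>k\<ge>K. nrm (t k) < e" using assms e by blast
    have "nrm (X m - X n) < e" if "m \<ge> K" "n \<ge> K" for m n
    proof (cases "n \<le> m")
      case True
      have "X m - X n = (\<Sum>k\<in>{n..<m}. t k)" unfolding X_def using True by (rule psum_diff)
      moreover have "nrm (\<Sum>k\<in>{n..<m}. t k) < e" using K that e by (intro nsum_less) auto
      ultimately show ?thesis by simp
    next
      case False
      have "X n - X m = (\<Sum>k\<in>{m..<n}. t k)" unfolding X_def using False by (intro psum_diff) simp
      moreover have "nrm (\<Sum>k\<in>{m..<n}. t k) < e" using K that e by (intro nsum_less) auto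
      ultimately show ?thesis using ncomm by metis
    qed
    then show "\<exists>N. \<forall>m\<ge>N. \<forall>n\<ge>N. nrm (X m - X n) < e" by blast
  qed
  then obtain L where "(\<lambda>n. nrm (X n - L)) \<longlonglongrightarrow> 0" by blast
  then have "nsums nrm t L" unfolding nsums_def X_def using ncomm by (metis (no_types, lifting) ext)
  then show ?thesis by blast
qed

lemma nsums_finite: assumes "\<forall>k\<ge>K. t k = 0" shows "nsums nrm t (\<Sum>k<K. t k)"
proof -
  have "eventually (\<lambda>n. nrm ((\<Sum>k<K. t k) - (\<Sum>k<n. t k)) = 0) sequentially"
    unfolding eventually_sequentially
  proof (intro exI allI impI)
    fix n assume "n \<ge> K"
    then have "(\<Sum>k<n. t k) - (\<Sum>k<K. t k) = (\<Sum>k\<in>{K..<n}. t k)" by (rule psum_diff)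
    also have "\<dots> = 0" using assms by simp
    finally show "nrm ((\<Sum>k<K. t k) - (\<Sum>k<n. t k)) = 0" by simp
  qed
  then show ?thesis unfolding nsums_def by (simp add: tendsto_eventually)
qed

lemma nsums_tail: assumes "nsums nrm t s" "\<forall>k\<ge>K. nrm (t k) \<le> e" "e > 0"
  shows "nrm (s - (\<Sum>k<K. t k)) \<le> e"
proof -
  obtain n1 where n1: "\<forall>n\<ge>n1. nrm (s - (\<Sum>k<n. t k)) < e"
    using assms(1) assms(3) unfolding nsums_def LIMSEQ_iff by (auto simp: nn)
  define n where "n = max n1 K"
  have a: "nrm (s - (\<Sum>k<n. t k)) < e" using n1 unfolding n_def by auto
  have "(\<Sum>k<n. t k) - (\<Sum>k<K. t k) = (\<Sum>k\<in>{K..<n}. t k)" unfolding n_def by (intro psum_diff) simp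
  moreover have "nrm (\<Sum>k\<in>{K..<n}. t k) \<le> e" using assms(2,3) by (intro nsum_le) auto
  ultimately have b: "nrm ((\<Sum>k<n. t k) - (\<Sum>k<K. t k)) \<le> e" by simp
  have "nrm (s - (\<Sum>k<K. t k)) \<le> max (nrm (s - (\<Sum>k<n. t k))) (nrm ((\<Sum>k<n. t k) - (\<Sum>k<K. t k)))"
    by (rule ntri)
  then show ?thesis using a b by simp
qed

end


definition dd :: "(nat \<Rightarrow> 'a::ab_group_add) \<Rightarrow> nat \<Rightarrow> 'a" where
  "dd g n = g (Suc n) - g n"

lemma dd_Suc: "(dd ^^ Suc n) g x = (dd ^^ n) g (Suc x) - (dd ^^ n) g x"
  by (simp add: dd_def)

lemma dd_shift: "(dd ^^ j) (\<lambda>n. g (Suc n)) x = (dd ^^ j) g (Suc x)"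
  by (induction j arbitrary: x) (simp_all add: dd_def)

lemma newton_alg:
  fixes d :: "nat \<Rightarrow> 'a::comm_ring_1"
  shows "(\<Sum>j\<le>N. of_nat (N choose j) * (d j + d (Suc j))) = (\<Sum>j\<le>Suc N. of_nat (Suc N choose j) * d j)"
proof -
  have r: "(\<Sum>j\<le>Suc N. of_nat (Suc N choose j) * d j)
      = d 0 + (\<Sum>j\<le>N. of_nat (N choose j) * d (Suc j)) + (\<Sum>j\<le>N. of_nat (N choose Suc j) * d (Suc j))"
    by (simp add: sum.atMost_Suc_shift ring_distribs sum.distrib del: sum.atMost_Suc binomial_Suc_Suc)
       (simp add: ring_distribs sum.distrib)
  have l: "(\<Sum>j\<le>N. of_nat (N choose j) * d j) = d 0 + (\<Sum>j\<le>N. of_nat (N choose Suc j) * d (Suc j))"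
  proof -
    have "(\<Sum>j\<le>N. of_nat (N choose j) * d j) = (\<Sum>j\<le>Suc N. of_nat (N choose j) * d j)"
      by (simp add: binomial_eq_0)
    also have "\<dots> = d 0 + (\<Sum>j\<le>N. of_nat (N choose Suc j) * d (Suc j))"
      by (simp only: sum.atMost_Suc_shift) simp
    finally show ?thesis .
  qed
  show ?thesis unfolding r using l by (simp add: ring_distribs sum.distrib)
qed

lemma newton:
  fixes g :: "nat \<Rightarrow> 'a::comm_ring_1"
  shows "g N = (\<Sum>j\<le>N. of_nat (N choose j) * (dd ^^ j) g 0)"
proof (induction N arbitrary: g)
  case 0 then show ?case by simp
next
  case (Suc N)
  have "g (Suc N) = (\<Sum>j\<le>N. of_nat (N choose j) * (dd ^^ j) (\<lambda>n. g (Suc n)) 0)"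
    using Suc.IH[of "\<lambda>n. g (Suc n)"] by simp
  also have "\<dots> = (\<Sum>j\<le>N. of_nat (N choose j) * ((dd ^^ j) g 0 + (dd ^^ Suc j) g 0))"
    by (simp add: dd_shift dd_def)
  also have "\<dots> = (\<Sum>j\<le>Suc N. of_nat (Suc N choose j) * (dd ^^ j) g 0)"
    by (rule newton_alg[where d = "\<lambda>j. (dd ^^ j) g 0"])
  finally show ?case .
qed

lemma binom_unique0:
  fixes u :: "nat \<Rightarrow> 'a::comm_ring_1"
  assumes "\<And>N. (\<Sum>k\<le>N. of_nat (N choose k) * u k) = 0"
  shows "u n = 0"
proof (induction n rule: less_induct)
  case (less n)
  have "(\<Sum>k\<le>n. of_nat (n choose k) * u k) = (\<Sum>k<n. of_nat (n choose k) * u k) + u n"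
    by (simp add: lessThan_Suc_atMost[symmetric])
  also have "(\<Sum>k<n. of_nat (n choose k) * u k) = 0" using less by simp
  finally show ?case using assms[of n] by simp
qed

lemma binom_unique:
  fixes a b :: "nat \<Rightarrow> 'a::comm_ring_1"
  assumes "\<And>N. (\<Sum>k\<le>N. of_nat (N choose k) * a k) = (\<Sum>k\<le>N. of_nat (N choose k) * b k)"
  shows "a n = b n"
proof -
  have "a n - b n = 0"
    by (rule binom_unique0[where u = "\<lambda>k. a k - b k"])
       (simp add: right_diff_distrib sum_subtractf assms)
  then show ?thesis by simp
qed

lemma dd_formula:
  fixes g :: "nat \<Rightarrow> 'a::comm_ring_1"
  shows "(dd ^^ n) g x = (\<Sum>i\<le>n. (-1) ^ (n + i) * of_nat (n choose i) * g (x + i))"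
proof (induction n arbitrary: x)
  case 0 then show ?case by simp
next
  case (Suc n)
  define F where "F x = (\<Sum>i\<le>n. (-1) ^ (n + i) * of_nat (n choose i) * g (x + i))" for x
  define R where "R = (\<Sum>i\<le>n. (-1) ^ (n + i) * of_nat (n choose Suc i) * g (x + Suc i))"
  have T: "(\<Sum>i\<le>Suc n. (-1) ^ (Suc n + i) * of_nat (Suc n choose i) * g (x + i))
      = (-1) ^ Suc n * g x + F (Suc x) + R"
  proof -
    have "(\<Sum>i\<le>Suc n. (-1) ^ (Suc n + i) * of_nat (Suc n choose i) * g (x + i))
        = (-1) ^ Suc n * g x + (\<Sum>i\<le>n. (-1) ^ (Suc n + Suc i) * of_nat (Suc n choose Suc i) * g (x + Suc i))"
      by (simp only: sum.atMost_Suc_shift) simp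
    also have "(\<Sum>i\<le>n. (-1) ^ (Suc n + Suc i) * of_nat (Suc n choose Suc i) * g (x + Suc i))
        = (\<Sum>i\<le>n. (-1) ^ (n + i) * of_nat (n choose i) * g (x + Suc i) + (-1) ^ (n + i) * of_nat (n choose Suc i) * g (x + Suc i))"
      by (intro sum.cong refl) (simp add: ring_distribs)
    also have "\<dots> = F (Suc x) + R" unfolding F_def R_def by (simp add: sum.distrib)
    finally show ?thesis by (simp add: add.assoc)
  qed
  have Fx: "F x = (-1) ^ n * g x - R"
  proof -
    have "F x = (\<Sum>i\<le>Suc n. (-1) ^ (n + i) * of_nat (n choose i) * g (x + i))" unfolding F_def by (simp add: binomial_eq_0)
    also have "\<dots> = (-1) ^ n * g x + (\<Sum>i\<le>n. (-1) ^ (n + Suc i) * of_nat (n choose Suc i) * g (x + Suc i))"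
      by (simp only: sum.atMost_Suc_shift) simp
    also have "(\<Sum>i\<le>n. (-1) ^ (n + Suc i) * of_nat (n choose Suc i) * g (x + Suc i)) = - R"
      unfolding R_def by (simp add: sum_negf[symmetric])
    finally show ?thesis by simp
  qed
  have "(dd ^^ Suc n) g x = F (Suc x) - F x" unfolding dd_Suc F_def Suc.IH by simp
  also have "\<dots> = (-1) ^ Suc n * g x + F (Suc x) + R" unfolding Fx by simp
  finally show ?case unfolding T .
qed

lemma prime_dvd_choose_pow:
  assumes p: "prime (p::nat)" and s: "s \<ge> 1" and i: "0 < i" "i < p ^ s"
  shows "p dvd (p ^ s choose i)"
proof (rule ccontr)
  assume nd: "\<not> p dvd (p ^ s choose i)"
  have "i * (p ^ s choose i) = p ^ s * ((p ^ s - 1) choose (i - 1))"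
    using i(1) by (rule times_binomial_minus1_eq)
  then have "p ^ s dvd i * (p ^ s choose i)" by simp
  moreover have "coprime (p ^ s) (p ^ s choose i)"
    using nd p by (simp add: prime_imp_coprime)
  ultimately have "p ^ s dvd i" using coprime_dvd_mult_left_iff by blast
  then show False using i by (simp add: nat_dvd_not_less)
qed


context cpl begin

lemma dd_bound: assumes "\<forall>n. nrm (g n) \<le> M" shows "nrm ((dd ^^ k) g n) \<le> M"
proof (induction k arbitrary: n)
  case 0 then show ?case using assms by simp
next
  case (Suc k)
  have "nrm ((dd ^^ Suc k) g n) \<le> max (nrm ((dd ^^ k) g (Suc n))) (nrm ((dd ^^ k) g n))"
    unfolding dd_Suc by (rule ndiff)
  then show ?case using Suc.IH[of n] Suc.IH[of "Suc n"] by simp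
qed

lemma dd_trans: assumes "\<forall>x. nrm (g (x + q) - g x) \<le> e"
  shows "nrm ((dd ^^ k) g (x + q) - (dd ^^ k) g x) \<le> e"
proof (induction k arbitrary: x)
  case 0 then show ?case using assms by simp
next
  case (Suc k)
  define h where "h = (dd ^^ k) g"
  have "(dd ^^ Suc k) g (x + q) - (dd ^^ Suc k) g x = (h (Suc x + q) - h (Suc x)) - (h (x + q) - h x)"
    unfolding dd_Suc h_def by simp
  moreover have "nrm ((h (Suc x + q) - h (Suc x)) - (h (x + q) - h x)) \<le> max (nrm (h (Suc x + q) - h (Suc x))) (nrm (h (x + q) - h x))"
    by (rule ndiff)
  ultimately show ?case using Suc.IH[of x] Suc.IH[of "Suc x"] unfolding h_def by simp
qed

lemma coeff_small:
  assumes s: "s \<ge> 1" and q: "q = p ^ s" and i: "i \<le> q"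
  shows "nrm ((-1) ^ (q + i) * of_nat (q choose i) - (if i = q then 1 else 0) + (if i = 0 then 1 else 0) :: 'a) \<le> 1 / real p"
proof -
  have "p ^ 1 \<le> p ^ s" using s p_ge2 by (intro power_increasing) auto
  then have q2: "q \<ge> 2" using q p_ge2 by simp
  consider "i = q" | "i = 0" | "0 < i \<and> i < q" using i by linarith
  then show ?thesis
  proof cases
    case 1
    have "(-1::'a) ^ (q + q) = 1" by (simp add: power_add[symmetric] flip: mult_2 power_mult)
    then show ?thesis using 1 q2 invp_pos by simp
  next
    case 2
    show ?thesis
    proof (cases "p = 2")
      case True
      have "even q" using q s True by simp
      then have "((-1) ^ (q + i) * of_nat (q choose i) - (if i = q then 1 else 0) + (if i = 0 then 1 else 0) :: 'a) = of_nat p"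
        using 2 q2 True by simp
      then show ?thesis using np by simp
    next
      case False
      then have "p > 2" using p_ge2 by simp
      then have "odd p" using prime_p by (simp add: prime_odd_nat)
      then have "odd q" using q by simp
      then have "((-1) ^ (q + i) * of_nat (q choose i) - (if i = q then 1 else 0) + (if i = 0 then 1 else 0) :: 'a) = 0"
        using 2 q2 by simp
      then show ?thesis using invp_pos by simp
    qed
  next
    case 3
    have "p dvd (q choose i)" unfolding q using prime_dvd_choose_pow[OF prime_p s] 3 q by simp
    then obtain r where r: "q choose i = p * r" by blast
    have "nrm ((-1) ^ (q + i) * of_nat (q choose i) - (if i = q then 1 else 0) + (if i = 0 then 1 else 0) :: 'a)
        = nrm ((-1) ^ (q + i) :: 'a) * (nrm (of_nat p :: 'a) * nrm (of_nat r :: 'a))"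
      using 3 r by (simp add: nmult)
    also have "\<dots> = (1 / real p) * nrm (of_nat r :: 'a)" by (simp add: npow nminus1 np)
    also have "\<dots> \<le> 1 / real p" using nnat[of r] invp_pos by (simp add: divide_right_mono)
    finally show ?thesis .
  qed
qed

lemma dd_step:
  assumes s: "s \<ge> 1" and q: "q = p ^ s" and M: "\<forall>n. nrm (g n) \<le> M" "M \<ge> 0"
  shows "nrm ((dd ^^ q) g x) \<le> max (nrm (g (x + q) - g x)) (M * (1 / real p))"
proof -
  define E where "E i = ((-1) ^ (q + i) * of_nat (q choose i) - (if i = q then 1 else 0) + (if i = 0 then 1 else 0) :: 'a)" for i
  have t: "E i * g (x + i) = (-1) ^ (q + i) * of_nat (q choose i) * g (x + i)
        - (if i = q then g (x + i) else 0) + (if i = 0 then g (x + i) else 0)" for i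
    unfolding E_def by (auto simp: algebra_simps)
  have "(\<Sum>i\<le>q. E i * g (x + i)) = (\<Sum>i\<le>q. (-1) ^ (q + i) * of_nat (q choose i) * g (x + i))
        - (\<Sum>i\<le>q. (if i = q then g (x + i) else 0)) + (\<Sum>i\<le>q. (if i = 0 then g (x + i) else 0))"
    unfolding t by (simp only: sum.distrib sum_subtractf)
  also have "\<dots> = (dd ^^ q) g x - g (x + q) + g x" by (simp add: dd_formula)
  finally have eq: "(dd ^^ q) g x = (g (x + q) - g x) + (\<Sum>i\<le>q. E i * g (x + i))" by (simp add: algebra_simps)
  have "nrm (\<Sum>i\<le>q. E i * g (x + i)) \<le> M * (1 / real p)"
  proof (rule nsum_le)
    fix i assume "i \<in> {..q}"
    then have "nrm (E i) \<le> 1 / real p" unfolding E_def using coeff_small[OF s q] by simp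
    then have "nrm (E i) * nrm (g (x + i)) \<le> (1 / real p) * M" using M by (intro mult_mono) (auto simp: nn)
    then show "nrm (E i * g (x + i)) \<le> M * (1 / real p)" by (simp add: nmult mult.commute)
  qed (use M invp_pos in simp)
  then show ?thesis unfolding eq using nadd[of "g (x + q) - g x" "\<Sum>i\<le>q. E i * g (x + i)"]
    by (auto simp: max_def split: if_splits)
qed

lemma dd_iter:
  assumes s: "s \<ge> 1" and q: "q = p ^ s" and M: "\<forall>n. nrm (g n) \<le> M" "M \<ge> 0"
    and e: "\<forall>x. nrm (g (x + q) - g x) \<le> e" "e \<ge> 0"
  shows "nrm ((dd ^^ (k * q)) g x) \<le> max e (M * (1 / real p) ^ k)"
proof (induction k arbitrary: x)
  case 0 then show ?case using M by (simp add: le_max_iff_disj)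
next
  case (Suc k)
  define h where "h = (dd ^^ (k * q)) g"
  define M' where "M' = max e (M * (1 / real p) ^ k)"
  have hb: "\<forall>n. nrm (h n) \<le> M'" using Suc.IH unfolding h_def M'_def by blast
  have M'0: "M' \<ge> 0" using e unfolding M'_def by simp
  have ht: "nrm (h (x + q) - h x) \<le> e" unfolding h_def by (rule dd_trans[OF e(1)])
  have "(dd ^^ (Suc k * q)) g x = (dd ^^ (q + k * q)) g x" by simp
  also have "\<dots> = (dd ^^ q) h x" unfolding h_def funpow_add by simp
  also have "nrm \<dots> \<le> max (nrm (h (x + q) - h x)) (M' * (1 / real p))" by (rule dd_step[OF s q hb M'0])
  also have "\<dots> \<le> max e (M * (1 / real p) ^ Suc k)"
  proof -
    have a: "e * (1 / real p) \<le> e" proof -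
      have "e * 1 \<le> e * real p" using e p_ge2 by (intro mult_left_mono) auto
      then show ?thesis using p_ge2 by (simp add: divide_le_eq)
    qed
    have "M' * (1 / real p) = max (e * (1 / real p)) (M * (1 / real p) ^ Suc k)"
      unfolding M'_def using invp_pos by (simp add: max_divide_distrib_right)
    then show ?thesis using ht a by (auto simp: max_def)
  qed
  finally show ?case .
qed

lemma dd_decay:
  assumes s: "s \<ge> 1" and q: "q = p ^ s" and M: "\<forall>n. nrm (g n) \<le> M" "M \<ge> 0"
    and e: "\<forall>x. nrm (g (x + q) - g x) \<le> e" "e > 0"
  shows "\<exists>n0. \<forall>n\<ge>n0. nrm ((dd ^^ n) g 0) \<le> e"
proof -
  have "e / (M + 1) > 0" using e M by simp
  then obtain k where k: "(1 / real p) ^ k < e / (M + 1)" using invp_pow_small by blast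
  have "M * (1 / real p) ^ k \<le> (M + 1) * (1 / real p) ^ k" using invp_pos by simp
  also have "\<dots> \<le> e" using k M by (simp add: field_simps)
  finally have Mk: "M * (1 / real p) ^ k \<le> e" .
  have "nrm ((dd ^^ n) g 0) \<le> e" if n: "n \<ge> k * q" for n
  proof -
    have "max e (M * (1 / real p) ^ k) = e" using Mk by simp
    then have hb: "\<forall>x. nrm ((dd ^^ (k * q)) g x) \<le> e"
      using dd_iter[OF s q M e(1) less_imp_le[OF e(2)]] by metis
    have nn': "n = (n - k * q) + k * q" using n by simp
    have "(dd ^^ n) g = (dd ^^ ((n - k * q) + k * q)) g" using nn' by metis
    also have "\<dots> = (dd ^^ (n - k * q)) ((dd ^^ (k * q)) g)" unfolding funpow_add by simp
    finally have "(dd ^^ n) g = (dd ^^ (n - k * q)) ((dd ^^ (k * q)) g)" .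
    then show ?thesis using dd_bound[OF hb] by simp
  qed
  then show ?thesis by blast
qed

end


locale cplf = cpl p nrm for p and nrm :: "'a::field_char_0 \<Rightarrow> real" +
  fixes phi :: "'a \<Rightarrow> 'a"
  assumes cont: "cont_Zp nrm phi"
begin

definition ball :: "nat \<Rightarrow> nat \<Rightarrow> 'a set" where
  "ball j s = {z \<in> Zp nrm. nrm (z - of_nat j) \<le> (1 / real p) ^ s}"

definition good :: "real \<Rightarrow> nat \<Rightarrow> nat \<Rightarrow> bool" where
  "good e j s \<longleftrightarrow> (\<exists>t. \<forall>u\<in>ball j s. \<forall>v\<in>ball j s. nrm (u - v) \<le> (1 / real p) ^ t \<longrightarrow> nrm (phi u - phi v) < e)"

definition children :: "nat \<Rightarrow> nat \<Rightarrow> nat set" where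
  "children j s = {j'. j' < p ^ Suc s \<and> nrm (of_nat j' - of_nat j :: 'a) \<le> (1 / real p) ^ s}"

lemma children_finite: "finite (children j s)"
  unfolding children_def by simp

lemma good_split: assumes "\<forall>j'\<in>children j s. good e j' (Suc s)" shows "good e j s"
proof -
  obtain T where T: "\<forall>j'\<in>children j s. \<forall>u\<in>ball j' (Suc s). \<forall>v\<in>ball j' (Suc s).
      nrm (u - v) \<le> (1 / real p) ^ T j' \<longrightarrow> nrm (phi u - phi v) < e"
    using bchoice[OF assms[unfolded good_def]] by blast
  define T0 where "T0 = Suc s + (\<Sum>j'\<in>children j s. T j')"
  have T0: "T j' \<le> T0" if "j' \<in> children j s" for j'
    unfolding T0_def using member_le_sum[OF that _ children_finite, of T] by simp
  have ps: "(1 / real p) ^ Suc s \<le> (1 / real p) ^ s" by (rule invp_pow_mono) simp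
  have "nrm (phi u - phi v) < e" if u: "u \<in> ball j s" and v: "v \<in> ball j s" and uv: "nrm (u - v) \<le> (1 / real p) ^ T0" for u v
  proof -
    have uZ: "u \<in> Zp nrm" and vZ: "v \<in> Zp nrm" using u v unfolding ball_def by auto
    obtain j' where j': "j' < p ^ Suc s" "nrm (u - of_nat j') \<le> (1 / real p) ^ Suc s"
      using approxA[OF uZ] by blast
    have "nrm (of_nat j' - of_nat j :: 'a) \<le> max (nrm (of_nat j' - u)) (nrm (u - of_nat j))" by (rule ntri)
    moreover have "nrm (of_nat j' - u) \<le> (1 / real p) ^ s" using j'(2) ps ncomm by (metis order_trans)
    moreover have "nrm (u - of_nat j) \<le> (1 / real p) ^ s" using u unfolding ball_def by simp
    ultimately have ch: "j' \<in> children j s" unfolding children_def using j'(1) by simp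
    have uT: "(1 / real p) ^ T0 \<le> (1 / real p) ^ Suc s" by (rule invp_pow_mono) (simp add: T0_def)
    have "nrm (v - of_nat j') \<le> max (nrm (v - u)) (nrm (u - of_nat j'))" by (rule ntri)
    moreover have "nrm (v - u) \<le> (1 / real p) ^ Suc s" using uv uT ncomm by (metis order_trans)
    ultimately have "nrm (v - of_nat j') \<le> (1 / real p) ^ Suc s" using j'(2) by simp
    then have vb: "v \<in> ball j' (Suc s)" using vZ unfolding ball_def by simp
    have ub: "u \<in> ball j' (Suc s)" using uZ j'(2) unfolding ball_def by simp
    have "nrm (u - v) \<le> (1 / real p) ^ T j'" using uv invp_pow_mono[OF T0[OF ch]] by simp
    then show ?thesis using T ch ub vb by blast
  qed
  then show ?thesis unfolding good_def by blast
qed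

lemma unif: assumes e: "e > 0"
  shows "\<exists>t. \<forall>u\<in>Zp nrm. \<forall>v\<in>Zp nrm. nrm (u - v) \<le> (1 / real p) ^ t \<longrightarrow> nrm (phi u - phi v) < e"
proof (rule ccontr)
  assume H: "\<not> ?thesis"
  have ball00: "ball 0 0 = Zp nrm" unfolding ball_def using Zp_le1 by auto
  have bad0: "\<not> good e 0 0" using H unfolding good_def ball00 by blast
  have bad_step: "\<exists>j'. j' \<in> children j s \<and> \<not> good e j' (Suc s)" if "\<not> good e j s" for j s
    using good_split that by blast
  define js where "js = rec_nat 0 (\<lambda>s j. SOME j'. j' \<in> children j s \<and> \<not> good e j' (Suc s))"
  have js0: "js 0 = 0" unfolding js_def by simp
  have jsS: "js (Suc s) = (SOME j'. j' \<in> children (js s) s \<and> \<not> good e j' (Suc s))" for s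
    unfolding js_def by simp
  have bad: "\<not> good e (js s) s \<and> (js (Suc s) \<in> children (js s) s)" for s
  proof (induction s)
    case 0
    have "\<exists>j'. j' \<in> children (js 0) 0 \<and> \<not> good e j' (Suc 0)" using bad_step bad0 js0 by simp
    then have "js (Suc 0) \<in> children (js 0) 0" unfolding jsS[of 0] by (rule someI2_ex) blast
    then show ?case using bad0 js0 by simp
  next
    case (Suc s)
    have "\<exists>j'. j' \<in> children (js s) s \<and> \<not> good e j' (Suc s)" using bad_step Suc by blast
    then have b: "\<not> good e (js (Suc s)) (Suc s)" unfolding jsS[of s] by (rule someI2_ex) blast
    then have "\<exists>j'. j' \<in> children (js (Suc s)) (Suc s) \<and> \<not> good e j' (Suc (Suc s))" using bad_step by blast
    then have "js (Suc (Suc s)) \<in> children (js (Suc s)) (Suc s)" unfolding jsS[of "Suc s"] by (rule someI2_ex) blast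
    then show ?case using b by simp
  qed
  define X where "X n = (of_nat (js n) :: 'a)" for n
  have step: "nrm (X (Suc s) - X s) \<le> (1 / real p) ^ s" for s
    using bad[of s] unfolding children_def X_def by simp
  have cauchy: "nrm (X m - X n) \<le> (1 / real p) ^ n" if "n \<le> m" for m n
    using that
  proof (induction m)
    case 0 then show ?case by simp
  next
    case (Suc m)
    show ?case
    proof (cases "n = Suc m")
      case True then show ?thesis using invp_pos by simp
    next
      case False
      then have nm: "n \<le> m" using Suc.prems by simp
      have "nrm (X (Suc m) - X n) \<le> max (nrm (X (Suc m) - X m)) (nrm (X m - X n))" by (rule ntri)
      moreover have "nrm (X (Suc m) - X m) \<le> (1 / real p) ^ n"
        using step[of m] invp_pow_mono[OF nm] by simp
      ultimately show ?thesis using Suc.IH[OF nm] by simp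
    qed
  qed
  have "\<exists>L. (\<lambda>n. nrm (X n - L)) \<longlonglongrightarrow> 0"
  proof (rule ncomplete, intro allI impI)
    fix r :: real assume r: "r > 0"
    obtain N where N: "(1 / real p) ^ N < r" using invp_pow_small r by blast
    have "nrm (X m - X n) < r" if "m \<ge> N" "n \<ge> N" for m n
    proof (cases "n \<le> m")
      case True
      then show ?thesis using cauchy[OF True] invp_pow_mono[OF that(2)] N by simp
    next
      case False
      then have "nrm (X n - X m) \<le> (1 / real p) ^ m" using cauchy by simp
      then show ?thesis using invp_pow_mono[OF that(1)] N ncomm by (metis order_le_less_trans order_trans)
    qed
    then show "\<exists>N. \<forall>m\<ge>N. \<forall>n\<ge>N. nrm (X m - X n) < r" by blast
  qed
  then obtain L where L: "(\<lambda>n. nrm (X n - L)) \<longlonglongrightarrow> 0" by blast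
  have Lev: "\<exists>n0. \<forall>n\<ge>n0. nrm (X n - L) < r" if "r > 0" for r
    using L that unfolding LIMSEQ_iff by (auto simp: nn)
  have LZ: "L \<in> Zp nrm" unfolding Zp_def
  proof (intro CollectI allI impI)
    fix r :: real assume "r > 0"
    then obtain n0 where "\<forall>n\<ge>n0. nrm (X n - L) < r" using Lev by blast
    then have "nrm (L - of_int (int (js n0))) < r" unfolding X_def using ncomm by (metis of_int_of_nat_eq order_refl)
    then show "\<exists>n::int. nrm (L - of_int n) < r" by blast
  qed
  have Lclose: "nrm (L - X s) \<le> (1 / real p) ^ s" for s
  proof -
    obtain n0 where n0: "\<forall>n\<ge>n0. nrm (X n - L) < (1 / real p) ^ s" using Lev[of "(1 / real p) ^ s"] invp_pos by auto
    define n where "n = max n0 s"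
    have "nrm (L - X s) \<le> max (nrm (L - X n)) (nrm (X n - X s))" by (rule ntri)
    moreover have "nrm (L - X n) < (1 / real p) ^ s" using n0 ncomm unfolding n_def by (metis max.cobounded1)
    moreover have "nrm (X n - X s) \<le> (1 / real p) ^ s" using cauchy unfolding n_def by simp
    ultimately show ?thesis by simp
  qed
  obtain d where d: "d > 0" "\<forall>x'\<in>Zp nrm. nrm (x' - L) < d \<longrightarrow> nrm (phi x' - phi L) < e"
    using cont LZ e unfolding cont_Zp_def by blast
  obtain s where s: "(1 / real p) ^ s < d" using invp_pow_small d(1) by blast
  have near: "nrm (phi u - phi L) < e" if "u \<in> ball (js s) s" for u
  proof -
    have "nrm (u - L) \<le> max (nrm (u - X s)) (nrm (X s - L))" by (rule ntri)
    moreover have "nrm (u - X s) \<le> (1 / real p) ^ s" using that unfolding ball_def X_def by simp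
    moreover have "nrm (X s - L) \<le> (1 / real p) ^ s" using Lclose ncomm by metis
    ultimately have "nrm (u - L) < d" using s by simp
    then show ?thesis using d(2) that unfolding ball_def by blast
  qed
  have "good e (js s) s" unfolding good_def
  proof (intro exI ballI impI)
    fix u v assume u: "u \<in> ball (js s) s" and v: "v \<in> ball (js s) s"
    have "nrm (phi u - phi v) \<le> max (nrm (phi u - phi L)) (nrm (phi L - phi v))" by (rule ntri)
    moreover have "nrm (phi L - phi v) < e" using near[OF v] ncomm by metis
    ultimately show "nrm (phi u - phi v) < e" using near[OF u] by simp
  qed
  then show False using bad[of s] by blast
qed

lemma bounded: "\<exists>M\<ge>0. \<forall>z\<in>Zp nrm. nrm (phi z) \<le> M"
proof -
  obtain t where t: "\<forall>u\<in>Zp nrm. \<forall>v\<in>Zp nrm. nrm (u - v) \<le> (1 / real p) ^ t \<longrightarrow> nrm (phi u - phi v) < 1"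
    using unif[of 1] by auto
  define M where "M = 1 + (\<Sum>j<p ^ t. nrm (phi (of_nat j)))"
  have M0: "M \<ge> 0" unfolding M_def by (simp add: nn sum_nonneg add_nonneg_nonneg)
  have "nrm (phi z) \<le> M" if z: "z \<in> Zp nrm" for z
  proof -
    obtain j where j: "j < p ^ t" "nrm (z - of_nat j) \<le> (1 / real p) ^ t" using approxA[OF z] by blast
    have a: "nrm (phi z - phi (of_nat j)) < 1" using t z Zp_nat j(2) by blast
    have "nrm (phi (of_nat j)) \<le> (\<Sum>j<p ^ t. nrm (phi (of_nat j)))"
      using j(1) by (intro member_le_sum) (auto simp: nn)
    then have b: "nrm (phi (of_nat j)) \<le> M" unfolding M_def by simp
    have "nrm (phi z) \<le> max (nrm (phi z - phi (of_nat j))) (nrm (phi (of_nat j)))"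
      using nadd[of "phi z - phi (of_nat j)" "phi (of_nat j)"] by simp
    moreover have "1 \<le> M" unfolding M_def by (simp add: nn sum_nonneg)
    ultimately show ?thesis using a b by (auto simp: max_def split: if_splits)
  qed
  then show ?thesis using M0 by blast
qed

end


lemma nabla_dd: "(nabla ^^ n) f (of_nat m) = (dd ^^ n) (\<lambda>j. f (of_nat j)) m"
proof (induction n arbitrary: m)
  case 0 then show ?case by simp
next
  case (Suc n)
  have "(nabla ^^ Suc n) f (of_nat m) = (nabla ^^ n) f (of_nat (Suc m)) - (nabla ^^ n) f (of_nat m)"
    by (simp add: nabla_def add.commute)
  then show ?case using Suc.IH[of m] Suc.IH[of "Suc m"] by (simp add: dd_def)
qed

lemma mahler_dd: "mahler f n = (dd ^^ n) (\<lambda>j. f (of_nat j)) 0"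
  unfolding mahler_def using nabla_dd[of n f 0] by simp

context cpl begin

definition ctsat :: "'a \<Rightarrow> ('a \<Rightarrow> 'a) \<Rightarrow> bool" where
  "ctsat x f \<longleftrightarrow> (\<forall>e>0. \<exists>d>0. \<forall>z\<in>Zp nrm. nrm (z - x) < d \<longrightarrow> nrm (f z - f x) < e)"

lemma ctsat_const: "ctsat x (\<lambda>z. c)"
  unfolding ctsat_def by (auto intro!: exI[of _ 1])

lemma ctsat_add: assumes "ctsat x f" "ctsat x g" shows "ctsat x (\<lambda>z. f z + g z)"
  unfolding ctsat_def
proof (intro allI impI)
  fix e :: real assume e: "e > 0"
  obtain d1 where d1: "d1 > 0" "\<forall>z\<in>Zp nrm. nrm (z - x) < d1 \<longrightarrow> nrm (f z - f x) < e"
    using assms(1) e unfolding ctsat_def by blast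
  obtain d2 where d2: "d2 > 0" "\<forall>z\<in>Zp nrm. nrm (z - x) < d2 \<longrightarrow> nrm (g z - g x) < e"
    using assms(2) e unfolding ctsat_def by blast
  have "nrm ((f z + g z) - (f x + g x)) < e" if "z \<in> Zp nrm" "nrm (z - x) < min d1 d2" for z
  proof -
    have "nrm ((f z + g z) - (f x + g x)) \<le> max (nrm (f z - f x)) (nrm (g z - g x))"
      using nadd[of "f z - f x" "g z - g x"] by (simp add: algebra_simps)
    moreover have "nrm (f z - f x) < e" "nrm (g z - g x) < e" using d1 d2 that by auto
    ultimately show ?thesis by simp
  qed
  then show "\<exists>d>0. \<forall>z\<in>Zp nrm. nrm (z - x) < d \<longrightarrow> nrm ((f z + g z) - (f x + g x)) < e"
    using d1 d2 by (intro exI[of _ "min d1 d2"]) auto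
qed

lemma ctsat_mult: assumes "ctsat x f" "ctsat x g" shows "ctsat x (\<lambda>z. f z * g z)"
  unfolding ctsat_def
proof (intro allI impI)
  fix e :: real assume e: "e > 0"
  define B where "B = max (nrm (f x)) (nrm (g x)) + 1"
  have B: "B > 0" "nrm (f x) < B" "nrm (g x) < B" unfolding B_def using nn[of "f x"] by auto
  have eB: "e / B > 0" using e B by simp
  obtain d1 where d1: "d1 > 0" "\<forall>z\<in>Zp nrm. nrm (z - x) < d1 \<longrightarrow> nrm (f z - f x) < e / B"
    using assms(1) eB unfolding ctsat_def by blast
  obtain d2 where d2: "d2 > 0" "\<forall>z\<in>Zp nrm. nrm (z - x) < d2 \<longrightarrow> nrm (g z - g x) < min 1 (e / B)"
    using assms(2) eB unfolding ctsat_def by (metis min_less_iff_conj zero_less_one)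
  have "nrm (f z * g z - f x * g x) < e" if z: "z \<in> Zp nrm" "nrm (z - x) < min d1 d2" for z
  proof -
    have gz1: "nrm (g z - g x) < 1" "nrm (g z - g x) < e / B" using d2 z by auto
    have fz: "nrm (f z - f x) < e / B" using d1 z by auto
    have "nrm (g z) \<le> max (nrm (g z - g x)) (nrm (g x))" using nadd[of "g z - g x" "g x"] by simp
    moreover have "max (nrm (g z - g x)) (nrm (g x)) < B"
    proof -
      have "1 \<le> B" unfolding B_def using nn[of "f x"] by simp
      then show ?thesis using gz1(1) B(3) by simp
    qed
    ultimately have gzB: "nrm (g z) < B" by linarith
    have eq: "f z * g z - f x * g x = (f z - f x) * g z + f x * (g z - g x)" by (simp add: algebra_simps)
    have a: "nrm ((f z - f x) * g z) < e"
    proof -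
      have "nrm (f z - f x) * nrm (g z) < (e / B) * B"
        using fz gzB eB nn[of "g z"] by (rule mult_strict_mono)
      then show ?thesis using B by (simp add: nmult)
    qed
    have b: "nrm (f x * (g z - g x)) < e"
    proof -
      have "nrm (f x) * nrm (g z - g x) < B * (e / B)"
        using B(2) gz1(2) B(1) nn[of "g z - g x"] by (rule mult_strict_mono)
      then show ?thesis using B by (simp add: nmult)
    qed
    show ?thesis unfolding eq using nadd[of "(f z - f x) * g z" "f x * (g z - g x)"] a b by simp
  qed
  then show "\<exists>d>0. \<forall>z\<in>Zp nrm. nrm (z - x) < d \<longrightarrow> nrm (f z * g z - f x * g x) < e"
    using d1 d2 by (intro exI[of _ "min d1 d2"]) auto
qed

lemma ctsat_sum: assumes "\<And>i. i \<in> A \<Longrightarrow> ctsat x (f i)" shows "ctsat x (\<lambda>z. \<Sum>i\<in>A. f i z)"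
  using assms
proof (induction A rule: infinite_finite_induct)
  case (infinite A) then show ?case by (simp add: ctsat_const)
next
  case empty then show ?case by (simp add: ctsat_const)
next
  case (insert a F)
  then show ?case by (simp add: ctsat_add)
qed

lemma ctsat_gch: assumes "x \<in> Zp nrm" shows "ctsat x (\<lambda>z. z gchoose k)"
  unfolding ctsat_def
proof (intro allI impI)
  fix e :: real assume e: "e > 0"
  have "nrm ((z gchoose k) - (x gchoose k)) < e" if "z \<in> Zp nrm" "nrm (z - x) < e * nrm (fact k :: 'a)" for z
  proof -
    have "nrm ((z gchoose k) - (x gchoose k)) \<le> nrm (z - x) / nrm (fact k :: 'a)" using gch_lip that(1) assms .
    also have "\<dots> < e" using that(2) fact_pos[of k] by (simp add: divide_less_eq)
    finally show ?thesis .
  qed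
  then show "\<exists>d>0. \<forall>z\<in>Zp nrm. nrm (z - x) < d \<longrightarrow> nrm ((z gchoose k) - (x gchoose k)) < e"
    using e fact_pos[of k] by (intro exI[of _ "e * nrm (fact k :: 'a)"]) auto
qed

end


context cplf begin

lemma ctsat_phi: assumes "x \<in> Zp nrm" shows "ctsat x (\<lambda>z. phi (z - of_nat k))"
  unfolding ctsat_def
proof (intro allI impI)
  fix e :: real assume e: "e > 0"
  have xk: "x - of_nat k \<in> Zp nrm" using assms Zp_nat Zp_diff by blast
  obtain d where d: "d > 0" "\<forall>x'\<in>Zp nrm. nrm (x' - (x - of_nat k)) < d \<longrightarrow> nrm (phi x' - phi (x - of_nat k)) < e"
    using cont xk e unfolding cont_Zp_def by blast
  have "nrm (phi (z - of_nat k) - phi (x - of_nat k)) < e" if "z \<in> Zp nrm" "nrm (z - x) < d" for z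
  proof -
    have "z - of_nat k \<in> Zp nrm" using that(1) Zp_nat Zp_diff by blast
    moreover have "nrm ((z - of_nat k) - (x - of_nat k)) < d" using that(2) by simp
    ultimately show ?thesis using d(2) by blast
  qed
  then show "\<exists>d>0. \<forall>z\<in>Zp nrm. nrm (z - x) < d \<longrightarrow> nrm (phi (z - of_nat k) - phi (x - of_nat k)) < e"
    using d(1) by blast
qed

lemma main:
  assumes yZ: "y \<in> Zp nrm" and xZ: "x \<in> Zp nrm"
  shows "Sop nrm y phi x = conv nrm (one_minus_x_pow nrm y) phi x"
proof -
  define a where "a k = (-1) ^ k * fact k * (y gchoose k)" for k
  define g where "g j = phi (of_nat j)" for j
  define b where "b m = mahler phi m" for m
  define F where "F = one_minus_x_pow nrm y"
  define cc where "cc n = (\<Sum>k\<le>n. of_nat (n choose k) * mahler F k * mahler phi (n - k))" for n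
  define tL where "tL z k = (-1) ^ k * fact k * (y gchoose k) * (z gchoose k) * phi (z - of_nat k)" for z k
  define tR where "tR z n = cc n * (z gchoose n)" for z n
  have Sop_eq: "Sop nrm y phi z = nsum nrm (tL z)" for z unfolding Sop_def tL_def by simp
  have conv_eq: "conv nrm F phi z = nsum nrm (tR z)" for z unfolding conv_def tR_def cc_def by simp
  obtain M where M: "M \<ge> 0" "\<forall>z\<in>Zp nrm. nrm (phi z) \<le> M" using bounded by blast
  have fact_le1: "nrm (fact k :: 'a) \<le> 1" for k using nnat[of "fact k"] by (simp add: of_nat_fact)
  have a_le: "nrm (a k) \<le> nrm (fact k :: 'a)" for k
  proof -
    have "nrm (a k) = nrm (fact k :: 'a) * nrm (y gchoose k)" unfolding a_def by (simp add: nmult npow nminus1)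
    also have "\<dots> \<le> nrm (fact k :: 'a) * 1" using gch_le1[OF yZ] by (intro mult_left_mono) (auto simp: nn)
    finally show ?thesis by simp
  qed
  have a_le1: "nrm (a k) \<le> 1" for k using a_le[of k] fact_le1[of k] by simp
  have gM: "\<forall>n. nrm (g n) \<le> M" unfolding g_def using M Zp_nat by blast
  have b_eq: "b m = (dd ^^ m) g 0" for m unfolding b_def g_def by (simp add: mahler_dd)
  have b_le: "nrm (b m) \<le> M" for m unfolding b_eq by (rule dd_bound[OF gM])
  have b_decay: "\<exists>n0. \<forall>n\<ge>n0. nrm (b n) \<le> e" if e: "e > 0" for e
  proof -
    obtain t where t: "\<forall>u\<in>Zp nrm. \<forall>v\<in>Zp nrm. nrm (u - v) \<le> (1 / real p) ^ t \<longrightarrow> nrm (phi u - phi v) < e"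
      using unif[OF e] by blast
    define q where "q = p ^ Suc t"
    have "nrm (g (j + q) - g j) \<le> e" for j
    proof -
      have "nrm (of_nat (j + q) - of_nat j :: 'a) = nrm (of_nat p ^ Suc t :: 'a)"
        unfolding q_def by (simp del: power_Suc)
      also have "\<dots> = (1 / real p) ^ Suc t" by (rule npow_p)
      also have "\<dots> \<le> (1 / real p) ^ t" by (rule invp_pow_mono) simp
      finally show ?thesis unfolding g_def using t Zp_nat by (meson less_imp_le)
    qed
    then obtain n0 where "\<forall>n\<ge>n0. nrm ((dd ^^ n) g 0) \<le> e"
      using dd_decay[of "Suc t" q g M e] q_def gM M(1) e by auto
    then show ?thesis unfolding b_eq by blast
  qed
  have F_nat: "F (of_nat N) = (\<Sum>k\<le>N. of_nat (N choose k) * a k)" for N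
  proof -
    define u where "u k = (-1) ^ k * fact k * (y gchoose k) * (of_nat N gchoose k) * (1::'a)" for k
    have "F (of_nat N) = nsum nrm u" unfolding F_def one_minus_x_pow_def Sop_def u_def by simp
    also have "nsums nrm u (\<Sum>k<Suc N. u k)"
      by (rule nsums_finite) (auto simp: u_def gch_nat binomial_eq_0)
    then have "nsum nrm u = (\<Sum>k<Suc N. u k)" by (rule nsum_eq)
    also have "\<dots> = (\<Sum>k\<le>N. of_nat (N choose k) * a k)"
      unfolding lessThan_Suc_atMost u_def a_def by (intro sum.cong) (auto simp: gch_nat)
    finally show ?thesis .
  qed
  have mF: "mahler F k = a k" for k
  proof -
    have "(dd ^^ k) (\<lambda>j. F (of_nat j)) 0 = a k"
    proof (rule binom_unique)
      fix N
      show "(\<Sum>k\<le>N. of_nat (N choose k) * (dd ^^ k) (\<lambda>j. F (of_nat j)) 0) = (\<Sum>k\<le>N. of_nat (N choose k) * a k)"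
        using newton[of "\<lambda>j. F (of_nat j)" N] F_nat[of N] by simp
    qed
    then show ?thesis by (simp add: mahler_dd)
  qed
  have cc_eq: "cc n = (\<Sum>k\<le>n. of_nat (n choose k) * a k * b (n - k))" for n
    unfolding cc_def b_def mF ..
  have cc_decay: "\<exists>n0. \<forall>n\<ge>n0. nrm (cc n) \<le> e" if e: "e > 0" for e
  proof -
    obtain K1 where K1: "\<forall>k\<ge>K1. nrm (fact k :: 'a) < e / (M + 1)" using fact_small[of "e / (M + 1)"] e M by auto
    obtain K2 where K2: "\<forall>n\<ge>K2. nrm (b n) \<le> e" using b_decay e by blast
    have "nrm (cc n) \<le> e" if n: "n \<ge> K1 + K2" for n
      unfolding cc_eq
    proof (rule nsum_le)
      fix k assume k: "k \<in> {..n}"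
      have "nrm (of_nat (n choose k) * a k * b (n - k)) \<le> nrm (a k) * nrm (b (n - k))"
      proof -
        have "nrm (of_nat (n choose k) :: 'a) * (nrm (a k) * nrm (b (n - k))) \<le> 1 * (nrm (a k) * nrm (b (n - k)))"
          using nnat[of "n choose k"] by (intro mult_right_mono) (auto simp: nn)
        then show ?thesis by (simp add: nmult mult.assoc)
      qed
      also have "\<dots> \<le> e"
      proof (cases "k \<ge> K1")
        case True
        have "nrm (a k) * nrm (b (n - k)) \<le> (e / (M + 1)) * M"
          using a_le[of k] K1 True b_le e M by (intro mult_mono) (auto simp: nn less_imp_le intro: order_trans)
        also have "\<dots> \<le> e" using M e by (simp add: field_simps)
        finally show ?thesis .
      next
        case False
        then have "n - k \<ge> K2" using n by simp
        then have "nrm (a k) * nrm (b (n - k)) \<le> 1 * e"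
          using a_le1 K2 by (intro mult_mono) (auto simp: nn)
        then show ?thesis by simp
      qed
      finally show "nrm (of_nat (n choose k) * a k * b (n - k)) \<le> e" .
    qed (use e in simp)
    then show ?thesis by blast
  qed
  have tL_eq: "tL z k = a k * (z gchoose k) * phi (z - of_nat k)" for z k unfolding tL_def a_def by simp
  have tL_small: "\<exists>K. \<forall>k\<ge>K. \<forall>z\<in>Zp nrm. nrm (tL z k) < e" if e: "e > 0" for e
  proof -
    obtain K where K: "\<forall>k\<ge>K. nrm (fact k :: 'a) < e / (M + 1)" using fact_small[of "e / (M + 1)"] e M by auto
    have "nrm (tL z k) < e" if k: "k \<ge> K" and z: "z \<in> Zp nrm" for k z
    proof -
      have zk: "z - of_nat k \<in> Zp nrm" using z Zp_nat Zp_diff by blast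
      have "nrm (tL z k) = nrm (a k) * nrm (z gchoose k) * nrm (phi (z - of_nat k))" unfolding tL_eq by (simp add: nmult)
      also have "\<dots> \<le> nrm (fact k :: 'a) * 1 * (M + 1)"
        using a_le[of k] gch_le1[OF z] M zk by (intro mult_mono) (auto simp: nn mult_nonneg_nonneg)
      also have "\<dots> < e / (M + 1) * (M + 1)" using K k M by (intro mult_strict_right_mono) auto
      also have "\<dots> = e" using M by simp
      finally show ?thesis .
    qed
    then show ?thesis by blast
  qed
  have tR_small: "\<exists>K. \<forall>k\<ge>K. \<forall>z\<in>Zp nrm. nrm (tR z k) < e" if e: "e > 0" for e
  proof -
    obtain K where K: "\<forall>n\<ge>K. nrm (cc n) \<le> e / 2" using cc_decay[of "e / 2"] e by auto
    have "nrm (tR z k) < e" if k: "k \<ge> K" and z: "z \<in> Zp nrm" for k z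
    proof -
      have "nrm (tR z k) = nrm (cc k) * nrm (z gchoose k)" unfolding tR_def by (simp add: nmult)
      also have "\<dots> \<le> nrm (cc k) * 1" using gch_le1[OF z] by (intro mult_left_mono) (auto simp: nn)
      also have "\<dots> < e" using K[rule_format, OF k] e by simp
      finally show ?thesis .
    qed
    then show ?thesis by blast
  qed
  have convL: "nsums nrm (tL z) (Sop nrm y phi z)" if z: "z \<in> Zp nrm" for z
  proof -
    obtain s where s: "nsums nrm (tL z) s"
      using nsums_exists[of "tL z"] tL_small z by meson
    then show ?thesis unfolding Sop_eq using nsum_eq by simp
  qed
  have convR: "nsums nrm (tR z) (conv nrm F phi z)" if z: "z \<in> Zp nrm" for z
  proof -
    obtain s where s: "nsums nrm (tR z) s"
      using nsums_exists[of "tR z"] tR_small z by meson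
    then show ?thesis unfolding conv_eq using nsum_eq by simp
  qed
  have nat_eq: "Sop nrm y phi (of_nat m) = conv nrm F phi (of_nat m)" for m
  proof -
    define f where "f i j = of_nat (m choose i) * of_nat ((m - i) choose j) * a i * b j" for i j
    have "nsums nrm (tL (of_nat m)) (\<Sum>k<Suc m. tL (of_nat m) k)"
      by (rule nsums_finite) (auto simp: tL_def gch_nat binomial_eq_0)
    then have L1: "Sop nrm y phi (of_nat m) = (\<Sum>k\<le>m. tL (of_nat m) k)"
      unfolding Sop_eq lessThan_Suc_atMost by (rule nsum_eq)
    have "nsums nrm (tR (of_nat m)) (\<Sum>k<Suc m. tR (of_nat m) k)"
      by (rule nsums_finite) (auto simp: tR_def gch_nat binomial_eq_0)
    then have R1: "conv nrm F phi (of_nat m) = (\<Sum>k\<le>m. tR (of_nat m) k)"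
      unfolding conv_eq lessThan_Suc_atMost by (rule nsum_eq)
    have L2: "(\<Sum>k\<le>m. tL (of_nat m) k) = (\<Sum>i\<le>m. \<Sum>j\<le>m - i. f i j)"
    proof (intro sum.cong refl)
      fix k assume k: "k \<in> {..m}"
      have "phi (of_nat m - of_nat k) = g (m - k)" unfolding g_def using k by (simp add: of_nat_diff)
      also have "\<dots> = (\<Sum>j\<le>m - k. of_nat ((m - k) choose j) * b j)"
        using newton[of g "m - k"] b_eq by simp
      finally have "tL (of_nat m) k = a k * of_nat (m choose k) * (\<Sum>j\<le>m - k. of_nat ((m - k) choose j) * b j)"
        unfolding tL_eq gch_nat by simp
      also have "\<dots> = (\<Sum>j\<le>m - k. f k j)" unfolding f_def sum_distrib_left
        by (intro sum.cong refl) (simp add: ac_simps)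
      finally show "tL (of_nat m) k = (\<Sum>j\<le>m - k. f k j)" .
    qed
    have R2: "(\<Sum>n\<le>m. tR (of_nat m) n) = (\<Sum>n\<le>m. \<Sum>i\<le>n. f i (n - i))"
    proof (intro sum.cong refl)
      fix n assume n: "n \<in> {..m}"
      have "tR (of_nat m) n = (\<Sum>i\<le>n. of_nat (n choose i) * a i * b (n - i) * of_nat (m choose n))"
        unfolding tR_def cc_eq gch_nat sum_distrib_right ..
      also have "\<dots> = (\<Sum>i\<le>n. f i (n - i))"
      proof (intro sum.cong refl)
        fix i assume i: "i \<in> {..n}"
        have "(m choose n) * (n choose i) = (m choose i) * ((m - i) choose (n - i))"
          using i n by (intro choose_mult) auto
        then have "(of_nat (n choose i) * of_nat (m choose n) :: 'a) = of_nat (m choose i) * of_nat ((m - i) choose (n - i))"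
          by (metis mult.commute of_nat_mult)
        then show "of_nat (n choose i) * a i * b (n - i) * of_nat (m choose n) = f i (n - i)"
          unfolding f_def by (metis (no_types, lifting) mult.assoc mult.commute)
      qed
      finally show "tR (of_nat m) n = (\<Sum>i\<le>n. f i (n - i))" .
    qed
    have "(\<Sum>n\<le>m. \<Sum>i\<le>n. f i (n - i)) = (\<Sum>(i, j)\<in>{(i, j). i + j \<le> m}. f i j)"
      by (rule sum.triangle_reindex_eq[symmetric])
    also have "{(i, j). i + j \<le> m} = Sigma {..m} (\<lambda>i. {..m - i})" by auto
    also have "(\<Sum>(i, j)\<in>Sigma {..m} (\<lambda>i. {..m - i}). f i j) = (\<Sum>i\<le>m. \<Sum>j\<le>m - i. f i j)"
      by (rule sum.Sigma[symmetric]) auto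
    finally show ?thesis unfolding L1 R1 L2 R2 by simp
  qed
  have close: "nrm (Sop nrm y phi x - conv nrm F phi x) \<le> e" if e: "e > 0" for e
  proof -
    define L where "L z = Sop nrm y phi z" for z
    define R where "R z = conv nrm F phi z" for z
    obtain K1 where K1: "\<forall>k\<ge>K1. \<forall>z\<in>Zp nrm. nrm (tL z k) < e" using tL_small e by blast
    obtain K2 where K2: "\<forall>k\<ge>K2. \<forall>z\<in>Zp nrm. nrm (tR z k) < e" using tR_small e by blast
    define K where "K = max K1 K2"
    define SL where "SL z = (\<Sum>k<K. tL z k)" for z
    define SR where "SR z = (\<Sum>k<K. tR z k)" for z
    have tailL: "nrm (L z - SL z) \<le> e" if z: "z \<in> Zp nrm" for z
      unfolding L_def SL_def using convL[OF z] K1 z e unfolding K_def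
      by (intro nsums_tail) (auto intro: less_imp_le)
    have tailR: "nrm (R z - SR z) \<le> e" if z: "z \<in> Zp nrm" for z
      unfolding R_def SR_def using convR[OF z] K2 z e unfolding K_def
      by (intro nsums_tail) (auto intro: less_imp_le)
    have cL: "ctsat x SL" unfolding SL_def tL_def
      by (intro ctsat_sum ctsat_mult ctsat_const ctsat_gch ctsat_phi xZ)
    have cR: "ctsat x SR" unfolding SR_def tR_def
      by (intro ctsat_sum ctsat_mult ctsat_const ctsat_gch xZ)
    obtain d1 where d1: "d1 > 0" "\<forall>z\<in>Zp nrm. nrm (z - x) < d1 \<longrightarrow> nrm (SL z - SL x) < e"
      using cL e unfolding ctsat_def by blast
    obtain d2 where d2: "d2 > 0" "\<forall>z\<in>Zp nrm. nrm (z - x) < d2 \<longrightarrow> nrm (SR z - SR x) < e"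
      using cR e unfolding ctsat_def by blast
    obtain m where m: "nrm (x - of_nat m) < min d1 d2" using approx_nat[OF xZ, of "min d1 d2"] d1 d2 by auto
    have m': "nrm (of_nat m - x) < min d1 d2" using m ncomm by metis
    have mZ: "(of_nat m :: 'a) \<in> Zp nrm" by (rule Zp_nat)
    have h1: "nrm (SL x - SL (of_nat m)) \<le> e" using d1 m' mZ ncomm by (metis less_imp_le min_less_iff_conj)
    have h2: "nrm (SR (of_nat m) - SR x) \<le> e" using d2 m' mZ by (meson less_imp_le min_less_iff_conj)
    have h3: "nrm (SL (of_nat m) - L (of_nat m)) \<le> e" using tailL[OF mZ] ncomm by metis
    have h4: "nrm (R (of_nat m) - SR (of_nat m)) \<le> e" using tailR[OF mZ] .
    have h5: "nrm (SR x - R x) \<le> e" using tailR[OF xZ] ncomm by metis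
    have h6: "nrm (L x - SL x) \<le> e" using tailL[OF xZ] .
    have eqm: "L (of_nat m) = R (of_nat m)" unfolding L_def R_def by (rule nat_eq)
    have g5: "nrm (SR (of_nat m) - R x) \<le> e"
      using ntri[of "SR (of_nat m)" "R x" "SR x"] h2 h5 by simp
    have g4: "nrm (R (of_nat m) - R x) \<le> e"
      using ntri[of "R (of_nat m)" "R x" "SR (of_nat m)"] h4 g5 by simp
    have g3: "nrm (SL (of_nat m) - R x) \<le> e"
      using ntri[of "SL (of_nat m)" "R x" "L (of_nat m)"] h3 g4 eqm by simp
    have g2: "nrm (SL x - R x) \<le> e"
      using ntri[of "SL x" "R x" "SL (of_nat m)"] h1 g3 by simp
    have g1: "nrm (L x - R x) \<le> e"
      using ntri[of "L x" "R x" "SL x"] h6 g2 by simp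
    then show ?thesis unfolding L_def R_def .
  qed
  have "nrm (Sop nrm y phi x - conv nrm F phi x) = 0"
  proof (rule ccontr)
    assume "nrm (Sop nrm y phi x - conv nrm F phi x) \<noteq> 0"
    then have pos: "nrm (Sop nrm y phi x - conv nrm F phi x) > 0" using nn by (simp add: less_le)
    show False using close[OF half_gt_zero[OF pos]] pos by simp
  qed
  then show ?thesis unfolding F_def using nz by simp
qed

end


theorem proposition6p7:
  fixes p :: nat and nrm :: "'a::field_char_0 \<Rightarrow> real"
    and phi :: "'a \<Rightarrow> 'a" and y :: 'a
  assumes "is_Cp p nrm" and "cont_Zp nrm phi" and "y \<in> Zp nrm"
  shows "\<forall>x\<in>Zp nrm. Sop nrm y phi x = conv nrm (one_minus_x_pow nrm y) phi x"
proof -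
  interpret cplf p nrm phi
    using assms(1,2) by (simp add: cplf_def cpl_def cplf_axioms_def)
  show ?thesis using main assms(3) by blast
qed

end
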